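(* Let $1\le m\le n/2$, $\delta>0$ and $s:=m-\delta^2$. If $$s\in\Big]0,\ \frac{m^2}{n}+\frac{2(n-m)^2}{n(n-1)(n+2)}\Big[,$$ then every $\delta$-code $C\subset\mathcal G_{m,n}$ satisfies $$|C|\le\frac nm\cdot\frac{m-s}{-s+\frac{m^2}{n}+\frac{2(n-m)^2}{n(n-1)(n+2)}}.$$
   Context: $\mathcal G_{m,n}$ is the set of $m$-dimensional linear subspaces of $\mathbb R^n$. For $p,q\in\mathcal G_{m,n}$ with principal angles $\theta_1,\dots,\theta_m\in[0,\pi/2]$ (defined recursively: $\theta_1$ is the minimal angle between a line of $p$ and a line of $q$, the rest are the principal angles of the orthogonal complements of these lines in $p$ and $q$), the chordal distance is $d_c(p,q)=\sqrt{\sum_i\sin^2\theta_i}$. A $\delta$-code is a finite $C\subset\mathcal G_{m,n}$ with $d_c(p,q)\ge\delta$ for all distinct $p,q\in C$. *)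

theory Defs
  imports "HOL-Analysis.Analysis"
begin

definition grassmannian :: "nat \<Rightarrow> (real^'n) set set" where
  "grassmannian m = {V. subspace V \<and> dim V = m}"

text \<open>The angle between the lines spanned by unit vectors x, y is
  arccos |x . y| in [0, pi/2]; minimal angle = maximal |x . y|.\<close>
definition principal_angles :: "nat \<Rightarrow> (real^'n) set \<Rightarrow> (real^'n) set \<Rightarrow> (nat \<Rightarrow> real) \<Rightarrow> bool" where
  "principal_angles k p q \<theta> \<longleftrightarrow>
     (\<exists>u v. \<forall>i<k.
        u i \<in> p \<and> v i \<in> q \<and> norm (u i) = 1 \<and> norm (v i) = 1 \<and>
        (\<forall>j<i. orthogonal (u j) (u i) \<and> orthogonal (v j) (v i)) \<and>
        \<theta> i = arccos \<bar>u i \<bullet> v i\<bar> \<and>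
        (\<forall>x y. x \<in> p \<and> y \<in> q \<and> norm x = 1 \<and> norm y = 1 \<and>
               (\<forall>j<i. orthogonal (u j) x \<and> orthogonal (v j) y)
               \<longrightarrow> \<bar>x \<bullet> y\<bar> \<le> \<bar>u i \<bullet> v i\<bar>))"

definition chordal_dist :: "(real^'n) set \<Rightarrow> (real^'n) set \<Rightarrow> real" where
  "chordal_dist p q =
     (let \<theta> = (SOME \<theta>. principal_angles (dim p) p q \<theta>)
      in sqrt (\<Sum>i<dim p. (sin (\<theta> i))\<^sup>2))"

definition delta_code :: "nat \<Rightarrow> real \<Rightarrow> (real^'n) set set \<Rightarrow> bool" where
  "delta_code m \<delta> C \<longleftrightarrow> finite C \<and> C \<subseteq> grassmannian m \<and>
     (\<forall>p\<in>C. \<forall>q\<in>C. p \<noteq> q \<longrightarrow> chordal_dist p q \<ge> \<delta>)"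

end

theory Submission
  imports Defs
begin

definition dl :: "'a \<Rightarrow> 'a \<Rightarrow> real" where "dl a b = (if a = b then 1 else 0)"
lemma dl_sum1[simp]: "(\<Sum>c\<in>UNIV. f c * dl a c) = f (a::'a::finite)"
  by (simp add: dl_def if_distrib[where f="\<lambda>x. _ * x"] sum.delta cong: if_cong)
lemma dl_sum2[simp]: "(\<Sum>c\<in>UNIV. f c * dl c a) = f (a::'a::finite)"
  by (simp add: dl_def if_distrib[where f="\<lambda>x. _ * x"] sum.delta' cong: if_cong)
lemma dl_refl[simp]: "dl a a = 1" by (simp add: dl_def)
lemma dl_sym: "dl a b = dl b a" by (simp add: dl_def)
lemma dl_sum3[simp]: "(\<Sum>c\<in>UNIV. dl a c) = 1" "(\<Sum>c\<in>UNIV. dl c a) = (1::real)" for a :: "'a::finite"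
  using dl_sum1[of "\<lambda>_. 1" a] dl_sum2[of "\<lambda>_. 1" a] by simp_all

definition S4 :: "('a::finite \<Rightarrow> 'a \<Rightarrow> 'a \<Rightarrow> 'a \<Rightarrow> real) \<Rightarrow> real" where
  "S4 F = (\<Sum>a\<in>UNIV. \<Sum>b\<in>UNIV. \<Sum>c\<in>UNIV. \<Sum>d\<in>UNIV. F a b c d)"

lemma t1: fixes f :: "'a::finite \<Rightarrow> 'a \<Rightarrow> 'a \<Rightarrow> 'a \<Rightarrow> real" shows "S4 (\<lambda>a b c d. f a b c d * (dl a c * dl b d)) = (\<Sum>a\<in>UNIV. \<Sum>b\<in>UNIV. f a b a b)"
  unfolding S4_def by (simp flip: mult.assoc)
lemma t2: fixes f :: "'a::finite \<Rightarrow> 'a \<Rightarrow> 'a \<Rightarrow> 'a \<Rightarrow> real" shows "S4 (\<lambda>a b c d. f a b c d * (dl a d * dl b c)) = (\<Sum>a\<in>UNIV. \<Sum>b\<in>UNIV. f a b b a)"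
  unfolding S4_def apply (subst mult.commute[of "dl _ _"]) by (simp flip: mult.assoc)
lemma t3: fixes f :: "'a::finite \<Rightarrow> 'a \<Rightarrow> 'a \<Rightarrow> 'a \<Rightarrow> real" shows "S4 (\<lambda>a b c d. f a b c d * (dl a b * dl c d)) = (\<Sum>a\<in>UNIV. \<Sum>c\<in>UNIV. f a a c c)"
  unfolding S4_def apply (simp flip: mult.assoc)
  apply (subst sum.swap) apply (simp add: sum_distrib_right[symmetric])
  done
lemma t4: fixes f :: "'a::finite \<Rightarrow> 'a \<Rightarrow> 'a \<Rightarrow> 'a \<Rightarrow> real" shows "S4 (\<lambda>a b c d. f a b c d * (w a c * dl b d)) = (\<Sum>a\<in>UNIV. \<Sum>b\<in>UNIV. \<Sum>c\<in>UNIV. f a b c b * w a c)"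
  unfolding S4_def by (simp flip: mult.assoc)

lemma S4_add: "S4 (\<lambda>a b c d. F a b c d + G a b c d) = S4 F + S4 G"
  unfolding S4_def by (simp add: sum.distrib)
lemma S4_diff: "S4 (\<lambda>a b c d. F a b c d - G a b c d) = S4 F - S4 G"
  unfolding S4_def by (simp add: sum_subtractf)
lemma S4_cmult: "S4 (\<lambda>a b c d. k * F a b c d) = k * S4 F"
  unfolding S4_def by (simp add: sum_distrib_left)
lemma S4_nonneg: "S4 (\<lambda>a b c d. (F a b c d)^2) \<ge> 0"
  unfolding S4_def by (intro sum_nonneg) auto
lemma S4_sum: "S4 (\<lambda>a b c d. \<Sum>p\<in>C. F p a b c d) = (\<Sum>p\<in>C. S4 (F p))"
  unfolding S4_def by (simp only: sum.swap[where A=C])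

definition tens :: "('a::finite \<Rightarrow> 'a \<Rightarrow> 'a \<Rightarrow> 'a \<Rightarrow> real) \<Rightarrow> real^'a^'a^'a^'a" where
  "tens F = (\<chi> a b c d. F a b c d)"

lemma tens_inner: "tens F \<bullet> tens G = S4 (\<lambda>a b c d. F a b c d * G a b c d)"
  unfolding tens_def S4_def by (simp add: inner_vec_def)

lemma sqsum: "(\<Sum>a\<in>A. \<Sum>b\<in>B. f a b)^2 = (\<Sum>a\<in>A. \<Sum>b\<in>B. \<Sum>c\<in>A. \<Sum>d\<in>B. f a b * (f c d::real))"
  unfolding power2_eq_square by (simp only: sum_distrib_right) (simp only: sum_distrib_left)

lemma expand4:
  fixes g x1 x2 x3 x4 :: "'a::real_inner"
  shows "(g - (c1 *\<^sub>R x1 + c2 *\<^sub>R x2 - c3 *\<^sub>R x3 + c4 *\<^sub>R x4)) \<bullet> (g - (c1 *\<^sub>R x1 + c2 *\<^sub>R x2 - c3 *\<^sub>R x3 + c4 *\<^sub>R x4))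
   = g \<bullet> g - 2 * (c1 * (g \<bullet> x1) + c2 * (g \<bullet> x2) - c3 * (g \<bullet> x3) + c4 * (g \<bullet> x4))
     + (c1^2 * (x1 \<bullet> x1) + c2^2 * (x2 \<bullet> x2) + c3^2 * (x3 \<bullet> x3) + c4^2 * (x4 \<bullet> x4)
        + 2 * c1 * c2 * (x2 \<bullet> x1) - 2 * c1 * c3 * (x3 \<bullet> x1) + 2 * c1 * c4 * (x4 \<bullet> x1)
        - 2 * c2 * c3 * (x3 \<bullet> x2) + 2 * c2 * c4 * (x4 \<bullet> x2) - 2 * c3 * c4 * (x4 \<bullet> x3))"
  by (simp add: inner_diff_left inner_diff_right inner_add_left inner_add_right inner_commute power2_eq_square algebra_simps)

lemma key:
  fixes M :: "'p \<Rightarrow> 'n::finite \<Rightarrow> 'n \<Rightarrow> real"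
  assumes fin: "finite C"
    and sym: "\<And>p a b. p \<in> C \<Longrightarrow> M p a b = M p b a"
    and tr: "\<And>p. p \<in> C \<Longrightarrow> (\<Sum>a\<in>UNIV. M p a a) = 0"
    and sq: "\<And>p a b. p \<in> C \<Longrightarrow> (\<Sum>c\<in>UNIV. M p a c * M p c b) = g * M p a b + (A / real CARD('n)) * dl a b"
    and n2: "CARD('n) \<ge> 2"
  shows "(\<Sum>p\<in>C. \<Sum>q\<in>C. (\<Sum>a\<in>UNIV. \<Sum>b\<in>UNIV. M p a b * M q a b)^2) \<ge>
     (real (card C))^2 * A^2 / ((real CARD('n) - 1) * (real CARD('n) + 2) / 2)
     + g^2 / real CARD('n) * (\<Sum>p\<in>C. \<Sum>q\<in>C. (\<Sum>a\<in>UNIV. \<Sum>b\<in>UNIV. M p a b * M q a b))"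
proof -
  define n where "n = real CARD('n)"
  define N where "N = real (card C)"
  define y where "y p q = (\<Sum>a\<in>UNIV. \<Sum>b\<in>UNIV. M p a b * M q a b)" for p q
  define G where "G a b c d = (\<Sum>p\<in>C. M p a b * M p c d)" for a b c d
  define W where "W a b = (\<Sum>p\<in>C. M p a b)" for a b
  define T1 where "T1 a b c d = dl a c * dl b d" for a b c d :: 'n
  define T2 where "T2 a b c d = dl a d * dl b c" for a b c d :: 'n
  define T3 where "T3 a b c d = dl a b * dl c d" for a b c d :: 'n
  define K where "K a b c d = W a c * dl b d" for a b c d :: 'n
  have n2': "n \<ge> 2" using n2 unfolding n_def by simp
  have nrm: "(\<Sum>a\<in>UNIV. \<Sum>b\<in>UNIV. M p a b * M p a b) = A" if "p \<in> C" for p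
  proof -
    have "(\<Sum>a\<in>UNIV. \<Sum>b\<in>UNIV. M p a b * M p a b) = (\<Sum>a\<in>UNIV. \<Sum>b\<in>UNIV. M p a b * M p b a)"
      using sym[OF that] by simp
    also have "\<dots> = (\<Sum>a\<in>UNIV. g * M p a a + (A / n) * dl a a)"
      using sq[OF that] unfolding n_def by simp
    also have "\<dots> = g * (\<Sum>a\<in>UNIV. M p a a) + A"
      using n2' by (simp add: sum.distrib sum_distrib_left n_def)
    finally show ?thesis using tr[OF that] by simp
  qed
  have trW: "(\<Sum>a\<in>UNIV. W a a) = 0"
    unfolding W_def by (subst sum.swap) (simp add: tr)
  have GG: "tens G \<bullet> tens G = (\<Sum>p\<in>C. \<Sum>q\<in>C. (y p q)^2)"
  proof -
    have "tens G \<bullet> tens G = S4 (\<lambda>a b c d. \<Sum>p\<in>C. \<Sum>q\<in>C. M p a b * M p c d * (M q a b * M q c d))"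
      unfolding tens_inner G_def by (simp add: sum_product)
    also have "\<dots> = (\<Sum>p\<in>C. \<Sum>q\<in>C. S4 (\<lambda>a b c d. M p a b * M p c d * (M q a b * M q c d)))"
      by (simp add: S4_sum)
    also have "\<dots> = (\<Sum>p\<in>C. \<Sum>q\<in>C. (y p q)^2)"
      unfolding S4_def y_def sqsum by (simp add: algebra_simps)
    finally show ?thesis .
  qed
  have S1: "(\<Sum>p\<in>C. \<Sum>q\<in>C. y p q) = (\<Sum>a\<in>UNIV. \<Sum>b\<in>UNIV. W a b * W a b)"
    unfolding y_def W_def sum_product
    by (simp add: sum.swap[where A=UNIV and B=C])
  have GT1: "tens G \<bullet> tens T1 = N * A"
    unfolding tens_inner T1_def t1 unfolding G_def N_def
    by (simp add: sum.swap[where A=UNIV and B=C] nrm)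
  have GT2: "tens G \<bullet> tens T2 = N * A"
    unfolding tens_inner T2_def t2 unfolding G_def N_def
    by (simp add: sum.swap[where A=UNIV and B=C] nrm sym cong: sum.cong)
  have GT3: "tens G \<bullet> tens T3 = 0"
    unfolding tens_inner T3_def t3 unfolding G_def
    by (simp add: sum.swap[where A=UNIV and B=C] tr flip: sum_distrib_left sum_distrib_right)
  have GK: "tens G \<bullet> tens K = g * (\<Sum>a\<in>UNIV. \<Sum>b\<in>UNIV. W a b * W a b)"
  proof -
    have inner: "(\<Sum>b\<in>UNIV. G a b c b) = g * W a c + N * A / n * dl a c" for a c
    proof -
      have "(\<Sum>b\<in>UNIV. G a b c b) = (\<Sum>p\<in>C. \<Sum>b\<in>UNIV. M p a b * M p b c)"
        unfolding G_def by (subst sum.swap) (simp add: sym cong: sum.cong)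
      also have "\<dots> = (\<Sum>p\<in>C. g * M p a c + (A / n) * dl a c)"
        using sq unfolding n_def by simp
      finally show ?thesis unfolding W_def N_def by (simp add: sum.distrib sum_distrib_left)
    qed
    have "tens G \<bullet> tens K = (\<Sum>a\<in>UNIV. \<Sum>c\<in>UNIV. (\<Sum>b\<in>UNIV. G a b c b) * W a c)"
      unfolding tens_inner K_def t4 by (simp only: sum_distrib_right) (rule sum.cong[OF refl], rule sum.swap)
    also have "\<dots> = (\<Sum>a\<in>UNIV. \<Sum>c\<in>UNIV. g * (W a c * W a c) + (N * A / n) * (W a c * dl a c))"
      unfolding inner by (simp add: algebra_simps)
    also have "\<dots> = g * (\<Sum>a\<in>UNIV. \<Sum>b\<in>UNIV. W a b * W a b)"
    proof -
      have "(\<Sum>a\<in>UNIV. \<Sum>c\<in>UNIV. (N * A / n) * (W a c * dl a c)) = (N * A / n) * (\<Sum>a\<in>UNIV. W a a)"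
        by (simp only: sum_distrib_left[symmetric] dl_sum1)
      then show ?thesis using trW by (simp add: sum.distrib sum_distrib_left[symmetric])
    qed
    finally show ?thesis .
  qed
  have T1T1: "tens T1 \<bullet> tens T1 = n^2"
    proof -
    have "S4 (\<lambda>a b c d. T1 a b c d * T1 a b c d) = S4 (\<lambda>a b c d. T1 a b c d * (dl a c * dl b d))" by (simp only: T1_def)
    then show ?thesis unfolding tens_inner t1[of T1] by (simp add: n_def power2_eq_square T1_def)
  qed
  have T2T1: "tens T2 \<bullet> tens T1 = n"
    proof -
    have "S4 (\<lambda>a b c d. T2 a b c d * T1 a b c d) = S4 (\<lambda>a b c d. T2 a b c d * (dl a c * dl b d))" by (simp only: T1_def)
    then show ?thesis unfolding tens_inner t1[of T2] by (simp add: n_def T2_def dl_sym)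
  qed
  have T3T1: "tens T3 \<bullet> tens T1 = n"
    proof -
    have "S4 (\<lambda>a b c d. T3 a b c d * T1 a b c d) = S4 (\<lambda>a b c d. T3 a b c d * (dl a c * dl b d))" by (simp only: T1_def)
    then show ?thesis unfolding tens_inner t1[of T3] by (simp add: n_def T3_def dl_sym)
  qed
  have KT1: "tens K \<bullet> tens T1 = 0"
    proof -
    have "S4 (\<lambda>a b c d. K a b c d * T1 a b c d) = S4 (\<lambda>a b c d. K a b c d * (dl a c * dl b d))" by (simp only: T1_def)
    then show ?thesis unfolding tens_inner t1[of K] using trW by (simp add: K_def flip: sum_distrib_left)
  qed
  have T2T2: "tens T2 \<bullet> tens T2 = n^2"
    proof -
    have "S4 (\<lambda>a b c d. T2 a b c d * T2 a b c d) = S4 (\<lambda>a b c d. T2 a b c d * (dl a d * dl b c))" by (simp only: T2_def)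
    then show ?thesis unfolding tens_inner t2[of T2] by (simp add: n_def power2_eq_square T2_def)
  qed
  have T3T2: "tens T3 \<bullet> tens T2 = n"
    proof -
    have "S4 (\<lambda>a b c d. T3 a b c d * T2 a b c d) = S4 (\<lambda>a b c d. T3 a b c d * (dl a d * dl b c))" by (simp only: T2_def)
    then show ?thesis unfolding tens_inner t2[of T3] by (simp add: n_def T3_def dl_sym)
  qed
  have KT2: "tens K \<bullet> tens T2 = 0"
    proof -
    have "S4 (\<lambda>a b c d. K a b c d * T2 a b c d) = S4 (\<lambda>a b c d. K a b c d * (dl a d * dl b c))" by (simp only: T2_def)
    then show ?thesis unfolding tens_inner t2[of K] using trW by (simp add: K_def flip: sum_distrib_left)
  qed
  have T3T3: "tens T3 \<bullet> tens T3 = n^2"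
    proof -
    have "S4 (\<lambda>a b c d. T3 a b c d * T3 a b c d) = S4 (\<lambda>a b c d. T3 a b c d * (dl a b * dl c d))" by (simp only: T3_def)
    then show ?thesis unfolding tens_inner t3[of T3] by (simp add: n_def power2_eq_square T3_def)
  qed
  have KT3: "tens K \<bullet> tens T3 = 0"
    proof -
    have "S4 (\<lambda>a b c d. K a b c d * T3 a b c d) = S4 (\<lambda>a b c d. K a b c d * (dl a b * dl c d))" by (simp only: T3_def)
    then show ?thesis unfolding tens_inner t3[of K] using trW by (simp add: K_def flip: sum_distrib_left)
  qed
  have KK: "tens K \<bullet> tens K = n * (\<Sum>a\<in>UNIV. \<Sum>b\<in>UNIV. W a b * W a b)"
    unfolding tens_inner t4[of K W, unfolded K_def[symmetric]]
    by (simp add: K_def n_def sum_distrib_left mult.commute)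
  define S where "S = (\<Sum>a\<in>UNIV. \<Sum>b\<in>UNIV. W a b * W a b)"
  define d where "d = (n - 1) * (n + 2) / 2"
  have dpos: "d > 0" using n2' unfolding d_def by simp
  define \<alpha> where "\<alpha> = N * A / d"
  define \<beta> where "\<beta> = g / n"
  define H where "H = (\<alpha>/2) *\<^sub>R tens T1 + (\<alpha>/2) *\<^sub>R tens T2 - (\<alpha>/n) *\<^sub>R tens T3 + \<beta> *\<^sub>R tens K"
  have "0 \<le> (tens G - H) \<bullet> (tens G - H)" by simp
  also have "\<dots> = tens G \<bullet> tens G - 2 * (\<alpha>/2 * (N*A) + \<alpha>/2 * (N*A) - \<alpha>/n * 0 + \<beta> * (g * S))
      + ((\<alpha>/2)^2 * n^2 + (\<alpha>/2)^2 * n^2 + (\<alpha>/n)^2 * n^2 + \<beta>^2 * (n * S)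
         + 2 * (\<alpha>/2) * (\<alpha>/2) * n - 2 * (\<alpha>/2) * (\<alpha>/n) * n + 2 * (\<alpha>/2) * \<beta> * 0
         - 2 * (\<alpha>/2) * (\<alpha>/n) * n + 2 * (\<alpha>/2) * \<beta> * 0 - 2 * (\<alpha>/n) * \<beta> * 0)"
    unfolding H_def expand4 GT1 GT2 GT3 GK T1T1 T2T1 T3T1 KT1 T2T2 T3T2 KT2 T3T3 KT3 KK S_def ..
  also have "\<dots> = tens G \<bullet> tens G - 2 * \<alpha> * (N * A) - 2 * \<beta> * g * S + \<alpha>^2 * d + \<beta>^2 * n * S"
    using n2' unfolding d_def by (simp add: field_simps power2_eq_square)
  also have "\<alpha>^2 * d = N^2 * A^2 / d" unfolding \<alpha>_def using dpos by (simp add: field_simps power2_eq_square)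
  also have "2 * \<alpha> * (N * A) = 2 * (N^2 * A^2 / d)" unfolding \<alpha>_def using dpos by (simp add: field_simps power2_eq_square)
  also have "\<beta>^2 * n * S = g^2 / n * S" unfolding \<beta>_def using n2' by (simp add: field_simps power2_eq_square)
  also have "2 * \<beta> * g * S = 2 * (g^2 / n * S)" unfolding \<beta>_def using n2' by (simp add: field_simps power2_eq_square)
  also have "tens G \<bullet> tens G - 2 * (N^2 * A^2 / d) - 2 * (g^2 / n * S) + N^2 * A^2 / d + g^2 / n * S
     = tens G \<bullet> tens G - N^2 * A^2 / d - g^2 / n * S" by (simp add: algebra_simps)
  finally show ?thesis using GG S1 unfolding S_def y_def N_def n_def d_def by simp
qed


definition orthonormal :: "'a::real_inner set \<Rightarrow> bool" where
  "orthonormal B \<longleftrightarrow> pairwise orthogonal B \<and> (\<forall>x\<in>B. norm x = 1)"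

lemma on_inner: "orthonormal B \<Longrightarrow> u \<in> B \<Longrightarrow> v \<in> B \<Longrightarrow> u \<bullet> v = (if u = v then 1 else 0)"
  unfolding orthonormal_def pairwise_def orthogonal_def by (auto simp: norm_eq_1)

lemma on_expand:
  fixes B :: "'a::real_inner set"
  assumes "finite B" "orthonormal B" "z \<in> span B"
  shows "z = (\<Sum>u\<in>B. (u \<bullet> z) *\<^sub>R u)"
proof -
  obtain c where c: "z = (\<Sum>v\<in>B. c v *\<^sub>R v)" using assms(3) span_finite[OF assms(1)] by auto
  have "u \<bullet> z = c u" if "u \<in> B" for u
  proof -
    have "u \<bullet> z = (\<Sum>v\<in>B. c v * (u \<bullet> v))" unfolding c by (simp add: inner_sum_right)
    also have "\<dots> = (\<Sum>v\<in>B. if v = u then c v else 0)"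
      using on_inner[OF assms(2) that] by (intro sum.cong) auto
    also have "\<dots> = c u" using assms(1) that by simp
    finally show ?thesis .
  qed
  then show ?thesis using c by simp
qed

lemma on_parseval:
  fixes B :: "'a::real_inner set"
  assumes "finite B" "orthonormal B" "z \<in> span B"
  shows "z \<bullet> z = (\<Sum>u\<in>B. (u \<bullet> z)^2)"
proof -
  have "z \<bullet> z = (\<Sum>u\<in>B. (u \<bullet> z) *\<^sub>R u) \<bullet> z" using on_expand[OF assms] by simp
  also have "\<dots> = (\<Sum>u\<in>B. (u \<bullet> z)^2)" by (simp add: inner_sum_left power2_eq_square)
  finally show ?thesis .
qed

lemma on_proj_inv:
  fixes B B' :: "'a::real_inner set"
  assumes "finite B" "orthonormal B" "finite B'" "orthonormal B'" "span B = span B'"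
  shows "(\<Sum>u\<in>B. (u \<bullet> x)^2) = (\<Sum>u\<in>B'. (u \<bullet> x)^2)"
proof -
  define z where "z = (\<Sum>u\<in>B. (u \<bullet> x) *\<^sub>R u)"
  have zs: "z \<in> span B" unfolding z_def by (intro span_sum span_scale span_base)
  have uz: "u \<bullet> z = u \<bullet> x" if "u \<in> B" for u
  proof -
    have "u \<bullet> z = (\<Sum>v\<in>B. (v \<bullet> x) * (u \<bullet> v))" unfolding z_def by (simp add: inner_sum_right)
    also have "\<dots> = (\<Sum>v\<in>B. if v = u then v \<bullet> x else 0)"
      using on_inner[OF assms(2) that] by (intro sum.cong) auto
    also have "\<dots> = u \<bullet> x" using assms(1) that by simp
    finally show ?thesis .
  qed
  have wz: "w \<bullet> z = w \<bullet> x" if "w \<in> B'" for w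
  proof -
    have "w \<in> span B" using that assms(5) span_base by blast
    then have w: "w = (\<Sum>u\<in>B. (u \<bullet> w) *\<^sub>R u)" using on_expand[OF assms(1,2)] by blast
    have "w \<bullet> z = (\<Sum>u\<in>B. (u \<bullet> w) * (u \<bullet> z))" by (subst w) (simp add: inner_sum_left)
    also have "\<dots> = (\<Sum>u\<in>B. (u \<bullet> w) * (u \<bullet> x))" using uz by simp
    also have "\<dots> = w \<bullet> x" by (subst (2) w) (simp add: inner_sum_left)
    finally show ?thesis .
  qed
  have "(\<Sum>u\<in>B. (u \<bullet> x)^2) = (\<Sum>u\<in>B. (u \<bullet> z)^2)" using uz by simp
  also have "\<dots> = z \<bullet> z" using on_parseval[OF assms(1,2) zs] by simp
  also have "\<dots> = (\<Sum>u\<in>B'. (u \<bullet> z)^2)" using on_parseval[OF assms(3,4)] zs assms(5) by simp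
  also have "\<dots> = (\<Sum>u\<in>B'. (u \<bullet> x)^2)" using wz by simp
  finally show ?thesis .
qed

definition PB :: "(real^'n) set \<Rightarrow> (real^'n) set \<Rightarrow> (nat \<Rightarrow> real^'n) \<Rightarrow> (nat \<Rightarrow> real^'n) \<Rightarrow> nat \<Rightarrow> bool" where
  "PB p q u v i \<longleftrightarrow> u i \<in> p \<and> v i \<in> q \<and> norm (u i) = 1 \<and> norm (v i) = 1 \<and>
        (\<forall>j<i. orthogonal (u j) (u i) \<and> orthogonal (v j) (v i)) \<and>
        (\<forall>x y. x \<in> p \<and> y \<in> q \<and> norm x = 1 \<and> norm y = 1 \<and>
               (\<forall>j<i. orthogonal (u j) x \<and> orthogonal (v j) y)
               \<longrightarrow> \<bar>x \<bullet> y\<bar> \<le> \<bar>u i \<bullet> v i\<bar>)"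

lemma PB_cong: "(\<And>j. j \<le> i \<Longrightarrow> u j = u' j \<and> v j = v' j) \<Longrightarrow> PB p q u v i = PB p q u' v' i"
proof -
  assume h: "\<And>j. j \<le> i \<Longrightarrow> u j = u' j \<and> v j = v' j"
  have e1: "u i = u' i" "v i = v' i" using h by auto
  have e2: "\<And>j. j < i \<Longrightarrow> u j = u' j" "\<And>j. j < i \<Longrightarrow> v j = v' j" using h by auto
  have e3: "(\<forall>j<i. P (u j) (v j)) = (\<forall>j<i. P (u' j) (v' j))" for P using e2 by auto
  show ?thesis unfolding PB_def e1 e3[of "\<lambda>a b. orthogonal a (u' i) \<and> orthogonal b (v' i)"] 
    by (simp only: e3[of "\<lambda>a b. orthogonal a _ \<and> orthogonal b _"])
qed

lemma PB_D:
  assumes "PB p q u v i"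
  shows "u i \<in> p" "v i \<in> q" "norm (u i) = 1" "norm (v i) = 1"
    "\<And>j. j < i \<Longrightarrow> orthogonal (u j) (u i)" "\<And>j. j < i \<Longrightarrow> orthogonal (v j) (v i)"
    "\<And>x y. x \<in> p \<Longrightarrow> y \<in> q \<Longrightarrow> norm x = 1 \<Longrightarrow> norm y = 1 \<Longrightarrow>
       (\<And>j. j < i \<Longrightarrow> orthogonal (u j) x) \<Longrightarrow> (\<And>j. j < i \<Longrightarrow> orthogonal (v j) y) \<Longrightarrow> \<bar>x \<bullet> y\<bar> \<le> \<bar>u i \<bullet> v i\<bar>"
  using assms unfolding PB_def by blast+

lemma exists_unit_orth:
  fixes p :: "'a::euclidean_space set"
  assumes "subspace p" "finite U" "U \<subseteq> p" "card U < dim p"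
  shows "\<exists>x\<in>p. norm x = 1 \<and> (\<forall>w\<in>U. orthogonal w x)"
proof -
  have sp: "span p = p" using assms(1) by simp
  have s1: "span U \<subseteq> span p" unfolding sp by (rule span_minimal[OF assms(3) assms(1)])
  have s2: "span U \<noteq> span p"
  proof
    assume "span U = span p"
    then have "dim p = dim U" by (metis dim_span)
    also have "\<dots> \<le> card U" using dim_le_card[OF span_superset assms(2)] .
    finally show False using assms(4) by simp
  qed
  from s1 s2 have "span U \<subset> span p" by (rule psubsetI)
  then obtain x where x: "x \<noteq> 0" "x \<in> span p" "\<And>y. y \<in> span U \<Longrightarrow> orthogonal x y"
    using orthogonal_to_subspace_exists_gen[OF \<open>span U \<subset> span p\<close>] by metis
  define z where "z = (1 / norm x) *\<^sub>R x"
  have "z \<in> p" unfolding z_def using x(2) sp subspace_scale[OF assms(1)] by metis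
  moreover have "norm z = 1" using x(1) unfolding z_def by simp
  moreover have "orthogonal w z" if "w \<in> U" for w
  proof -
    have "x \<bullet> w = 0" using x(3)[OF span_base[OF that]] unfolding orthogonal_def .
    then show ?thesis unfolding z_def orthogonal_def by (simp add: inner_commute)
  qed
  ultimately show ?thesis by blast
qed

lemma exists_PB:
  fixes p q :: "(real^'n) set"
  assumes sp: "subspace p" and sq: "subspace q" and dp: "dim p = m" and dq: "dim q = m"
  shows "k \<le> m \<Longrightarrow> \<exists>u v. \<forall>i<k. PB p q u v i"
proof (induction k)
  case 0
  then show ?case by simp
next
  case (Suc k)
  then obtain u v where uv: "\<forall>i<k. PB p q u v i" by auto
  define P' where "P' = p \<inter> {y. \<forall>x\<in>u ` {..<k}. orthogonal x y}"
  define Q' where "Q' = q \<inter> {y. \<forall>x\<in>v ` {..<k}. orthogonal x y}"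
  have subP: "subspace P'" unfolding P'_def by (intro subspace_inter sp subspace_orthogonal_to_vectors)
  have subQ: "subspace Q'" unfolding Q'_def by (intro subspace_inter sq subspace_orthogonal_to_vectors)
  define S where "S = (P' \<inter> sphere 0 1) \<times> (Q' \<inter> sphere 0 1)"
  have cS: "compact S" unfolding S_def
  proof (rule compact_Times)
    show "compact (P' \<inter> sphere 0 1)" using compact_Int_closed[OF compact_sphere closed_subspace[OF subP]]
      by (simp add: Int_commute)
    show "compact (Q' \<inter> sphere 0 1)" using compact_Int_closed[OF compact_sphere closed_subspace[OF subQ]]
      by (simp add: Int_commute)
  qed
  have "\<exists>x\<in>p. norm x = 1 \<and> (\<forall>w\<in>u ` {..<k}. orthogonal w x)"
  proof (rule exists_unit_orth[OF sp])
    show "u ` {..<k} \<subseteq> p" using uv PB_D(1) by blast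
    have "card (u ` {..<k}) \<le> k" using card_image_le[of "{..<k}" u] by simp
    then show "card (u ` {..<k}) < dim p" using Suc.prems dp by simp
  qed simp
  then obtain x1 where x1: "x1 \<in> P' \<inter> sphere 0 1" unfolding P'_def by auto
  have "\<exists>x\<in>q. norm x = 1 \<and> (\<forall>w\<in>v ` {..<k}. orthogonal w x)"
  proof (rule exists_unit_orth[OF sq])
    show "v ` {..<k} \<subseteq> q" using uv PB_D(2) by blast
    have "card (v ` {..<k}) \<le> k" using card_image_le[of "{..<k}" v] by simp
    then show "card (v ` {..<k}) < dim q" using Suc.prems dq by simp
  qed simp
  then obtain y1 where y1: "y1 \<in> Q' \<inter> sphere 0 1" unfolding Q'_def by auto
  have ne: "S \<noteq> {}" using x1 y1 unfolding S_def by auto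
  have "continuous_on S (\<lambda>z. \<bar>fst z \<bullet> snd z\<bar>)" by (intro continuous_intros)
  from continuous_attains_sup[OF cS ne this] obtain z0 where z0: "z0 \<in> S" "\<And>z. z \<in> S \<Longrightarrow> \<bar>fst z \<bullet> snd z\<bar> \<le> \<bar>fst z0 \<bullet> snd z0\<bar>"
    by blast
  obtain x0 y0 where xy0: "z0 = (x0, y0)" by (cases z0)
  have x0: "x0 \<in> p" "norm x0 = 1" "\<And>j. j < k \<Longrightarrow> orthogonal (u j) x0"
    using z0(1) unfolding xy0 S_def P'_def by auto
  have y0: "y0 \<in> q" "norm y0 = 1" "\<And>j. j < k \<Longrightarrow> orthogonal (v j) y0"
    using z0(1) unfolding xy0 S_def Q'_def by auto
  have mx: "\<bar>x \<bullet> y\<bar> \<le> \<bar>x0 \<bullet> y0\<bar>" if "x \<in> p" "y \<in> q" "norm x = 1" "norm y = 1"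
     "\<And>j. j < k \<Longrightarrow> orthogonal (u j) x" "\<And>j. j < k \<Longrightarrow> orthogonal (v j) y" for x y
  proof -
    have "(x, y) \<in> S" unfolding S_def P'_def Q'_def using that by auto
    from z0(2)[OF this] show ?thesis unfolding xy0 by simp
  qed
  define u' where "u' = u(k := x0)"
  define v' where "v' = v(k := y0)"
  have "PB p q u' v' i" if "i < Suc k" for i
  proof (cases "i < k")
    case True
    then have "PB p q u v i" using uv by simp
    moreover have "PB p q u' v' i = PB p q u v i"
      by (rule PB_cong) (use True in \<open>auto simp: u'_def v'_def\<close>)
    ultimately show ?thesis by simp
  next
    case False
    then have ik: "i = k" using that by simp
    have uk: "u' k = x0" "v' k = y0" unfolding u'_def v'_def by simp_all
    have uj: "u' j = u j" "v' j = v j" if "j < k" for j using that unfolding u'_def v'_def by simp_all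
    show ?thesis unfolding PB_def ik uk
      using x0 y0 mx uj by auto
  qed
  then show ?case by (intro exI[of _ u'] exI[of _ v']) simp
qed

lemma PB_swap: "PB p q u v i \<Longrightarrow> PB q p v u i"
  unfolding PB_def by (metis inner_commute)

lemma PB_cross:
  assumes pb: "\<forall>i<m. PB p q u v i" and sq: "subspace q" and ij: "i < j" "j < m"
  shows "u i \<bullet> v j = 0"
proof (rule ccontr)
  assume b0: "u i \<bullet> v j \<noteq> 0"
  define a where "a = u i \<bullet> v i"
  define b where "b = u i \<bullet> v j"
  define r where "r = sqrt (a^2 + b^2)"
  have bpos: "b^2 > 0" using b0 unfolding b_def by simp
  have r2: "r^2 = a^2 + b^2" unfolding r_def by simp
  have rpos: "r > 0" unfolding r_def using bpos by (simp add: add_nonneg_pos)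
  have pi: "PB p q u v i" and pj: "PB p q u v j" using pb ij by auto
  have vij: "v i \<bullet> v j = 0" using PB_D(6)[OF pj ij(1)] unfolding orthogonal_def .
  have vii: "v i \<bullet> v i = 1" "v j \<bullet> v j = 1" using PB_D(4)[OF pi] PB_D(4)[OF pj] by (simp_all add: norm_eq_1)
  define y where "y = (a / r) *\<^sub>R v i + (b / r) *\<^sub>R v j"
  have yq: "y \<in> q" unfolding y_def using PB_D(2)[OF pi] PB_D(2)[OF pj] sq
    by (intro subspace_add subspace_scale) auto
  have "y \<bullet> y = (a/r)^2 + (b/r)^2"
    unfolding y_def by (simp add: inner_add_left inner_add_right vij vii inner_commute[of "v j" "v i"] power2_eq_square)
  also have "\<dots> = 1"
  proof -
    have "a^2 + b^2 > 0" using bpos by (simp add: add_nonneg_pos)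
    then have "a^2 + b^2 \<noteq> 0" by linarith
    then show ?thesis by (simp only: power_divide r2 flip: add_divide_distrib) simp
  qed
  finally have ny: "norm y = 1" by (simp add: norm_eq_1)
  have oy: "orthogonal (v l) y" if "l < i" for l
  proof -
    have "v l \<bullet> v i = 0" using PB_D(6)[OF pi that] unfolding orthogonal_def .
    moreover have "v l \<bullet> v j = 0" using PB_D(6)[OF pj] that ij by (simp add: orthogonal_def)
    ultimately show ?thesis unfolding y_def orthogonal_def by (simp add: inner_add_right)
  qed
  have "\<bar>u i \<bullet> y\<bar> \<le> \<bar>u i \<bullet> v i\<bar>"
    using PB_D(7)[OF pi PB_D(1)[OF pi] yq PB_D(3)[OF pi] ny PB_D(5)[OF pi] oy] .
  moreover have "u i \<bullet> y = r"
  proof -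
    have "u i \<bullet> y = (a * a + b * b) / r" unfolding y_def a_def b_def by (simp add: inner_add_right add_divide_distrib)
    also have "\<dots> = r^2 / r" using r2 by (simp add: power2_eq_square)
    also have "\<dots> = r" using rpos by (simp add: power2_eq_square)
    finally show ?thesis .
  qed
  ultimately have "r \<le> \<bar>a\<bar>" unfolding a_def using rpos by simp
  then have "r^2 \<le> \<bar>a\<bar>^2" using rpos by (intro power_mono) auto
  then show False using r2 bpos by simp
qed

lemma PB_cross2:
  assumes pb: "\<forall>i<m. PB p q u v i" and sp: "subspace p" and sq: "subspace q" and ij: "i \<noteq> j" "i < m" "j < m"
  shows "u i \<bullet> v j = 0"
proof (cases "i < j")
  case True
  show ?thesis by (rule PB_cross[OF pb sq True ij(3)])
next
  case False
  then have "j < i" using ij by simp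
  moreover have "\<forall>i<m. PB q p v u i" using pb PB_swap by blast
  ultimately have "v j \<bullet> u i = 0" using PB_cross[OF _ sp _ ij(2)] by blast
  then show ?thesis by (simp add: inner_commute)
qed

lemma pa_iff: "principal_angles k p q \<theta> \<longleftrightarrow> (\<exists>u v. \<forall>i<k. PB p q u v i \<and> \<theta> i = arccos \<bar>u i \<bullet> v i\<bar>)"
  unfolding principal_angles_def PB_def by (simp only: conj_ac)

lemma family_to_set:
  fixes u :: "nat \<Rightarrow> 'a::euclidean_space"
  assumes sp: "subspace p" and dp: "dim p = m"
    and mem: "\<And>i. i < m \<Longrightarrow> u i \<in> p" and nu: "\<And>i. i < m \<Longrightarrow> norm (u i) = 1"
    and ort: "\<And>i j. i < m \<Longrightarrow> j < i \<Longrightarrow> orthogonal (u j) (u i)"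
  shows "inj_on u {..<m}" "finite (u ` {..<m})" "orthonormal (u ` {..<m})" "span (u ` {..<m}) = p"
proof -
  have ort2: "orthogonal (u i) (u j)" if "i < m" "j < m" "i \<noteq> j" for i j
  proof (cases "j < i")
    case True then show ?thesis using ort[OF that(1) True] by (simp add: orthogonal_commute)
  next
    case False then have "i < j" using that by simp
    then show ?thesis using ort[OF that(2)] by simp
  qed
  show inj: "inj_on u {..<m}"
  proof (rule inj_onI)
    fix i j assume ij: "i \<in> {..<m}" "j \<in> {..<m}" "u i = u j"
    show "i = j"
    proof (rule ccontr)
      assume "i \<noteq> j"
      then have "orthogonal (u i) (u i)" using ort2[of i j] ij by simp
      then have "u i = 0" by (simp add: orthogonal_self)
      then show False using nu[of i] ij by simp
    qed
  qed
  show fin: "finite (u ` {..<m})" by simp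
  have po: "pairwise orthogonal (u ` {..<m})"
  proof (rule pairwiseI)
    fix x y assume "x \<in> u ` {..<m}" "y \<in> u ` {..<m}" "x \<noteq> y"
    then obtain i j where "i < m" "j < m" "x = u i" "y = u j" by blast
    then show "orthogonal x y" using ort2 \<open>x \<noteq> y\<close> by blast
  qed
  have n1: "\<forall>x\<in>u ` {..<m}. norm x = 1" using nu by simp
  show on: "orthonormal (u ` {..<m})"
    unfolding orthonormal_def using po n1 by (rule conjI)
  have sub: "u ` {..<m} \<subseteq> p" using mem by (simp add: image_subset_iff)
  have ind: "independent (u ` {..<m})"
  proof (rule pairwise_orthogonal_independent)
    show "pairwise orthogonal (u ` {..<m})" by (rule po)
    show "0 \<notin> u ` {..<m}"
    proof
      assume "0 \<in> u ` {..<m}"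
      then have "norm (0::'a) = 1" using n1 by blast
      then show False by simp
    qed
  qed
  have card: "card (u ` {..<m}) = dim p" using card_image[OF inj] dp by simp
  have "p \<subseteq> span (u ` {..<m})" using card_eq_dim[OF sub card fin] ind by simp
  moreover have "span (u ` {..<m}) \<subseteq> p" by (rule span_minimal[OF sub sp])
  ultimately show "span (u ` {..<m}) = p" by blast
qed

lemma chordal_sets:
  fixes p q :: "(real^'n) set"
  assumes pG: "p \<in> grassmannian m" and qG: "q \<in> grassmannian m" and dpos: "\<delta> > 0"
    and cd: "chordal_dist p q \<ge> \<delta>"
  shows "\<exists>U V. finite U \<and> orthonormal U \<and> span U = p \<and> finite V \<and> orthonormal V \<and> span V = q \<and>
     (\<Sum>w\<in>U. \<Sum>z\<in>V. (w \<bullet> z)^2) \<le> real m - \<delta>^2"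
proof -
  have sp: "subspace p" and dp: "dim p = m" using pG unfolding grassmannian_def by auto
  have sq: "subspace q" and dq: "dim q = m" using qG unfolding grassmannian_def by auto
  obtain u0 v0 where "\<forall>i<m. PB p q u0 v0 i" using exists_PB[OF sp sq dp dq order_refl] by (elim exE)
  then have "principal_angles m p q (\<lambda>i. arccos \<bar>u0 i \<bullet> v0 i\<bar>)" unfolding pa_iff by (intro exI[of _ u0] exI[of _ v0]) simp
  then have "principal_angles m p q (SOME \<theta>. principal_angles m p q \<theta>)" by (rule someI[where P="principal_angles m p q"])
  then obtain u v where uv0: "\<forall>i<m. PB p q u v i \<and> (SOME \<theta>. principal_angles m p q \<theta>) i = arccos \<bar>u i \<bullet> v i\<bar>"
    unfolding pa_iff by (elim exE)
  have uv: "PB p q u v i \<and> (SOME \<theta>. principal_angles m p q \<theta>) i = arccos \<bar>u i \<bullet> v i\<bar>" if "i < m" for i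
    using uv0 that by simp
  define c where "c i = u i \<bullet> v i" for i
  have pbi: "PB p q u v i" if "i < m" for i using uv[OF that] by simp
  have pb: "\<forall>i<m. PB p q u v i" using pbi by simp
  have c1: "\<bar>c i\<bar> \<le> 1" if "i < m" for i
    using Cauchy_Schwarz_ineq2[of "u i" "v i"] PB_D(3,4)[OF uv[OF that, THEN conjunct1]] unfolding c_def by simp
  have sin2: "(sin ((SOME \<theta>. principal_angles m p q \<theta>) i))^2 = 1 - (c i)^2" if "i < m" for i
  proof -
    have "(SOME \<theta>. principal_angles m p q \<theta>) i = arccos \<bar>c i\<bar>" using uv[OF that] unfolding c_def by simp
    moreover have "(sin (arccos \<bar>c i\<bar>))^2 = 1 - (c i)^2"
    proof -
      have "(c i)^2 \<le> 1" using c1[OF that] by (metis abs_le_square_iff abs_one one_power2)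
      then show ?thesis using c1[OF that] by (simp add: sin_arccos)
    qed
    ultimately show ?thesis by simp
  qed
  have "chordal_dist p q = sqrt (\<Sum>i<m. 1 - (c i)^2)"
    unfolding chordal_dist_def Let_def dp using sin2 by simp
  also have "(\<Sum>i<m. 1 - (c i)^2) = real m - (\<Sum>i<m. (c i)^2)" by (simp add: sum_subtractf)
  finally have cdeq: "chordal_dist p q = sqrt (real m - (\<Sum>i<m. (c i)^2))" .
  have X0: "real m - (\<Sum>i<m. (c i)^2) \<ge> 0"
  proof -
    have "(\<Sum>i<m. (c i)^2) \<le> (\<Sum>i<m. 1)"
    proof (rule sum_mono)
      fix i assume "i \<in> {..<m}"
      then show "(c i)^2 \<le> 1" using c1 by (metis abs_le_square_iff abs_one lessThan_iff one_power2)
    qed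
    then show ?thesis by simp
  qed
  have "\<delta>^2 \<le> (sqrt (real m - (\<Sum>i<m. (c i)^2)))^2"
    using cd cdeq dpos by (intro power_mono) auto
  then have dle: "\<delta>^2 \<le> real m - (\<Sum>i<m. (c i)^2)" using X0 by simp
  have cross: "(\<Sum>j<m. (u i \<bullet> v j)^2) = (c i)^2" if "i < m" for i
  proof -
    have "(\<Sum>j<m. (u i \<bullet> v j)^2) = (\<Sum>j<m. if j = i then (c i)^2 else 0)"
      using PB_cross2[OF pb sp sq _ that] unfolding c_def by (intro sum.cong) auto
    also have "\<dots> = (c i)^2" using that by simp
    finally show ?thesis .
  qed
  have fu: "inj_on u {..<m}" "finite (u ` {..<m})" "orthonormal (u ` {..<m})" "span (u ` {..<m}) = p"
    by (rule family_to_set[OF sp dp PB_D(1)[OF pbi] PB_D(3)[OF pbi] PB_D(5)[OF pbi]]; assumption)+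
  have fv: "inj_on v {..<m}" "finite (v ` {..<m})" "orthonormal (v ` {..<m})" "span (v ` {..<m}) = q"
    by (rule family_to_set[OF sq dq PB_D(2)[OF pbi] PB_D(4)[OF pbi] PB_D(6)[OF pbi]]; assumption)+
  have "(\<Sum>w\<in>u ` {..<m}. \<Sum>z\<in>v ` {..<m}. (w \<bullet> z)^2) = (\<Sum>i<m. \<Sum>j<m. (u i \<bullet> v j)^2)"
    by (simp add: sum.reindex[OF fu(1)] sum.reindex[OF fv(1)])
  also have "\<dots> = (\<Sum>i<m. (c i)^2)" using cross by simp
  finally have "(\<Sum>w\<in>u ` {..<m}. \<Sum>z\<in>v ` {..<m}. (w \<bullet> z)^2) \<le> real m - \<delta>^2" using dle by simp
  then show ?thesis using fu fv by (intro exI[of _ "u ` {..<m}"] exI[of _ "v ` {..<m}"]) simp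
qed



lemma frac_cross: "(b::real) > 0 \<Longrightarrow> d > 0 \<Longrightarrow> a * d \<le> c * b \<Longrightarrow> a / b \<le> c / d"
  by (simp add: field_simps)

lemma ineq_aux:
  fixes n m :: real
  assumes m1: "m \<ge> 1" and mn: "2 * m \<le> n" and mnat: "m = 1 \<or> m \<ge> 2"
  shows "(1 - 2*m/n)^2 / n + m^2/n \<ge> 2 * (n - m)^2 / (n * (n - 1) * (n + 2))"
proof -
  have n2: "n \<ge> 2" using m1 mn by simp
  have D: "(n - 1) * (n + 2) > 0" using n2 by simp
  have l0: "(1 - 2*m/n)^2 / n \<ge> 0" using n2 by simp
  show ?thesis
  proof (cases "m = 1")
    case True
    have key: "2 * (n - 1) * n^2 \<le> (n^2 + (n-2)^2) * (n + 2)"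
    proof -
      have "(n^2 + (n-2)^2) * (n + 2) - 2 * (n - 1) * n^2 = 2 * n^2 - 4 * n + 8"
        by (simp add: algebra_simps power2_eq_square power3_eq_cube)
      also have "\<dots> = 2 * (n - 1)^2 + 6" by (simp add: algebra_simps power2_eq_square)
      finally show ?thesis by (smt (verit) zero_le_power2)
    qed
    have "2 * (n - m)^2 / (n * (n - 1) * (n + 2)) = 2 * (n - 1) / (n * (n + 2))"
    proof -
      have "n - 1 \<noteq> 0" "n \<noteq> 0" "n + 2 \<noteq> 0" using n2 by auto
      then have "n * (n - 1) * (n + 2) \<noteq> 0" "n * (n + 2) \<noteq> 0" by simp_all
      then show ?thesis using True by (simp add: frac_eq_eq power2_eq_square algebra_simps)
    qed
    also have "\<dots> \<le> ((n-2)^2 + n^2) / n^3"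
    proof (rule frac_cross)
      show "n * (n + 2) > 0" "n^3 > 0" using n2 by auto
      have "2 * (n - 1) * n ^ 3 = n * (2 * (n - 1) * n^2)" by (simp add: power2_eq_square power3_eq_cube)
      also have "\<dots> \<le> n * ((n^2 + (n-2)^2) * (n + 2))" using key n2 by (intro mult_left_mono) auto
      also have "\<dots> = ((n - 2)\<^sup>2 + n\<^sup>2) * (n * (n + 2))" by (simp add: algebra_simps)
      finally show "2 * (n - 1) * n ^ 3 \<le> ((n - 2)\<^sup>2 + n\<^sup>2) * (n * (n + 2))" .
    qed
    also have "\<dots> = ((n-2)^2 / n^2) / n + 1 / n"
    proof -
      have "n \<noteq> 0" using n2 by simp
      then show ?thesis by (simp add: field_simps power2_eq_square power3_eq_cube)
    qed
    also have "((n-2)^2 / n^2) = (1 - 2*m/n)^2" using True n2 by (simp add: field_simps power2_eq_square)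
    finally show ?thesis using True by simp
  next
    case False
    then have m2: "m \<ge> 2" using mnat by simp
    have a: "(n - m)^2 \<le> n^2" using m1 mn by (intro power_mono) auto
    have b: "2 * n^2 \<le> 4 * ((n - 1) * (n + 2))"
    proof -
      have "4 * ((n - 1) * (n + 2)) - 2 * n^2 = 2 * n^2 + 4 * n - 8" by (simp add: algebra_simps power2_eq_square)
      then show ?thesis using n2 by (smt (verit) zero_le_power2)
    qed
    have c: "4 \<le> m^2" using power_mono[of 2 m 2] m2 by simp
    have "2 * (n - m)^2 \<le> m^2 * ((n - 1) * (n + 2))"
    proof -
      have "2 * (n - m)^2 \<le> 2 * n^2" using a by simp
      also have "\<dots> \<le> 4 * ((n - 1) * (n + 2))" by (rule b)
      also have "\<dots> \<le> m^2 * ((n - 1) * (n + 2))" using c D by (intro mult_right_mono) auto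
      finally show ?thesis .
    qed
    then have "2 * (n - m)^2 / (n * (n - 1) * (n + 2)) \<le> m^2 / n"
    proof (intro frac_cross)
      assume h: "2 * (n - m)^2 \<le> m^2 * ((n - 1) * (n + 2))"
      show "n * (n - 1) * (n + 2) > 0" "n > 0" using D n2 by auto
      have "2 * (n - m)^2 * n \<le> m^2 * ((n - 1) * (n + 2)) * n" using h n2 by (intro mult_right_mono) auto
      then show "2 * (n - m)^2 * n \<le> m^2 * (n * (n - 1) * (n + 2))" by (simp add: algebra_simps)
    qed
    then show ?thesis using l0 by simp
  qed
qed

lemma quad_swap:
  fixes F :: "'v \<Rightarrow> 'a \<Rightarrow> real" and G :: "'w \<Rightarrow> 'a \<Rightarrow> real"
  shows "(\<Sum>a\<in>A. \<Sum>b\<in>A. (\<Sum>w\<in>U. F w a * F w b) * (\<Sum>z\<in>V. G z a * G z b)) = (\<Sum>w\<in>U. \<Sum>z\<in>V. (\<Sum>a\<in>A. F w a * G z a)^2)"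
proof -
  have L: "(\<Sum>a\<in>A. \<Sum>b\<in>A. (\<Sum>w\<in>U. F w a * F w b) * (\<Sum>z\<in>V. G z a * G z b))
    = (\<Sum>a\<in>A. \<Sum>b\<in>A. \<Sum>w\<in>U. \<Sum>z\<in>V. (F w a * G z a) * (F w b * G z b))"
    by (simp add: sum_product mult_ac)
  have R: "(\<Sum>w\<in>U. \<Sum>z\<in>V. (\<Sum>a\<in>A. F w a * G z a)^2) = (\<Sum>w\<in>U. \<Sum>z\<in>V. \<Sum>a\<in>A. \<Sum>b\<in>A. (F w a * G z a) * (F w b * G z b))"
    by (simp add: power2_eq_square sum_product)
  show ?thesis unfolding L R
    by (simp only: sum.swap[where A=A and B=U] sum.swap[where A=A and B=V])
qed

lemma idem_swap:
  fixes F :: "'v \<Rightarrow> 'a \<Rightarrow> real"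
  shows "(\<Sum>c\<in>A. (\<Sum>w\<in>U. F w a * F w c) * (\<Sum>z\<in>U. F z c * F z b)) = (\<Sum>w\<in>U. \<Sum>z\<in>U. F w a * (\<Sum>c\<in>A. F w c * F z c) * F z b)"
proof -
  have L: "(\<Sum>c\<in>A. (\<Sum>w\<in>U. F w a * F w c) * (\<Sum>z\<in>U. F z c * F z b)) = (\<Sum>c\<in>A. \<Sum>w\<in>U. \<Sum>z\<in>U. F w a * (F w c * F z c) * F z b)"
    by (simp add: sum_product mult_ac)
  have R: "(\<Sum>w\<in>U. \<Sum>z\<in>U. F w a * (\<Sum>c\<in>A. F w c * F z c) * F z b) = (\<Sum>w\<in>U. \<Sum>z\<in>U. \<Sum>c\<in>A. F w a * (F w c * F z c) * F z b)"
    by (simp add: sum_distrib_left sum_distrib_right)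
  show ?thesis unfolding L R by (simp only: sum.swap[where A=A and B=U])
qed

lemma ysum_nonneg:
  fixes M :: "'p \<Rightarrow> 'n \<Rightarrow> 'n \<Rightarrow> real"
  shows "(\<Sum>p\<in>C. \<Sum>q\<in>C. \<Sum>a\<in>A. \<Sum>b\<in>B. M p a b * M q a b) \<ge> 0"
proof -
  have "(\<Sum>p\<in>C. \<Sum>q\<in>C. \<Sum>a\<in>A. \<Sum>b\<in>B. M p a b * M q a b) = (\<Sum>a\<in>A. \<Sum>b\<in>B. (\<Sum>p\<in>C. M p a b) * (\<Sum>q\<in>C. M q a b))"
    by (simp add: sum_product) (simp only: sum.swap[where A=A and B=C] sum.swap[where A=B and B=C])
  also have "\<dots> \<ge> 0" by (intro sum_nonneg) auto
  finally show ?thesis .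
qed

lemma orthonormal_basis_ex:
  fixes p :: "(real^'n) set"
  assumes "p \<in> grassmannian m"
  shows "\<exists>B. finite B \<and> orthonormal B \<and> span B = p \<and> card B = m"
proof -
  have sp: "subspace p" and dp: "dim p = m" using assms unfolding grassmannian_def by auto
  obtain B where B: "B \<subseteq> p" "pairwise orthogonal B" "\<And>x. x \<in> B \<Longrightarrow> norm x = 1"
    "independent B" "card B = dim p" "span B = p"
    using orthonormal_basis_subspace[OF sp] by metis
  have "finite B" using B(4) by (simp add: finiteI_independent)
  then show ?thesis using B dp unfolding orthonormal_def by (intro exI[of _ B]) auto
qed

theorem theorem3p1:
  fixes C :: "(real^'n) set set" and m :: nat and \<delta> s :: real
  assumes "1 \<le> m" and "real m \<le> real CARD('n) / 2" and "\<delta> > 0"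
    and "s = real m - \<delta>\<^sup>2"
    and "0 < s"
    and "s < (real m)\<^sup>2 / real CARD('n)
             + 2 * (real CARD('n) - real m)\<^sup>2
               / (real CARD('n) * (real CARD('n) - 1) * (real CARD('n) + 2))"
    and "delta_code m \<delta> C"
  shows "real (card C) \<le> real CARD('n) / real m * ((real m - s) /
           (- s + (real m)\<^sup>2 / real CARD('n)
             + 2 * (real CARD('n) - real m)\<^sup>2
               / (real CARD('n) * (real CARD('n) - 1) * (real CARD('n) + 2))))"
  proof -
  define n where "n = real CARD('n)"
  define mm where "mm = real m"
  define N where "N = real (card C)"
  define bb where "bb = mm^2 / n"
  define e where "e = 2 * (n - mm)^2 / (n * (n - 1) * (n + 2))"
  define t where "t = s - bb"
  define A where "A = mm - mm^2 / n"
  define g where "g = 1 - 2 * mm / n"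
  have finC: "finite C" and CG: "C \<subseteq> grassmannian m"
    and cdist: "\<And>p q. p \<in> C \<Longrightarrow> q \<in> C \<Longrightarrow> p \<noteq> q \<Longrightarrow> chordal_dist p q \<ge> \<delta>"
    using assms(7) unfolding delta_code_def by auto
  have mm1: "mm \<ge> 1" using assms(1) unfolding mm_def by simp
  have n2: "n \<ge> 2" using assms(1,2) unfolding n_def by simp
  have n2': "CARD('n) \<ge> 2" using n2 unfolding n_def by simp
  have mmn: "2 * mm \<le> n" using assms(2) unfolding mm_def n_def by simp
  have npos: "n > 0" using n2 by simp
  have sdef: "s = mm - \<delta>^2" using assms(4) unfolding mm_def by simp
  have sE: "s < bb + e" using assms(6) unfolding bb_def e_def mm_def n_def by simp
  define B where "B p = (SOME B. finite B \<and> orthonormal B \<and> span B = p \<and> card B = m)" for p :: "(real^'n) set"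
  have Bp: "finite (B p) \<and> orthonormal (B p) \<and> span (B p) = p \<and> card (B p) = m" if "p \<in> C" for p
  proof -
    have "\<exists>B. finite B \<and> orthonormal B \<and> span B = p \<and> card B = m"
      using orthonormal_basis_ex[of p m] that CG by auto
    then show ?thesis unfolding B_def by (rule someI_ex)
  qed
  define x where "x p q = (\<Sum>w\<in>B p. \<Sum>z\<in>B q. (w \<bullet> z)^2)" for p q
  have xoff: "x p q \<le> s" if pq: "p \<in> C" "q \<in> C" "p \<noteq> q" for p q
  proof -
    obtain U V where UV: "finite U" "orthonormal U" "span U = p" "finite V" "orthonormal V" "span V = q"
      "(\<Sum>w\<in>U. \<Sum>z\<in>V. (w \<bullet> z)^2) \<le> real m - \<delta>^2"
      using chordal_sets[of p m q \<delta>] pq CG cdist[OF pq] assms(3) by blast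
    have Bpp: "finite (B p)" "orthonormal (B p)" "span (B p) = p" using Bp[OF pq(1)] by auto
    have Bqq: "finite (B q)" "orthonormal (B q)" "span (B q) = q" using Bp[OF pq(2)] by auto
    have "x p q = (\<Sum>w\<in>B p. \<Sum>z\<in>V. (z \<bullet> w)^2)"
      unfolding x_def using on_proj_inv[OF Bqq(1,2) UV(4,5)] Bqq(3) UV(6) by (simp add: inner_commute)
    also have "\<dots> = (\<Sum>z\<in>V. \<Sum>w\<in>B p. (w \<bullet> z)^2)" by (subst sum.swap) (simp add: inner_commute)
    also have "\<dots> = (\<Sum>z\<in>V. \<Sum>w\<in>U. (w \<bullet> z)^2)"
      using on_proj_inv[OF Bpp(1,2) UV(1,2)] Bpp(3) UV(3) by simp
    also have "\<dots> = (\<Sum>w\<in>U. \<Sum>z\<in>V. (w \<bullet> z)^2)" by (rule sum.swap)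
    finally show ?thesis using UV(7) sdef unfolding mm_def by simp
  qed
  have xdiag: "x p p = mm" if "p \<in> C" for p
  proof -
    have Bpp: "finite (B p)" "orthonormal (B p)" "card (B p) = m" using Bp[OF that] by auto
    have "x p p = (\<Sum>w\<in>B p. \<Sum>z\<in>B p. if w = z then 1 else 0)"
      unfolding x_def using on_inner[OF Bpp(2)] by (intro sum.cong refl) auto
    also have "\<dots> = mm" using Bpp unfolding mm_def by simp
    finally show ?thesis .
  qed
  have xnn: "x p q \<ge> 0" for p q unfolding x_def by (intro sum_nonneg) auto
  define P where "P p a b = (\<Sum>w\<in>B p. w $ a * w $ b)" for p a b
  define k where "k = mm / n"
  define M where "M p a b = P p a b - k * dl a b" for p a b
  have PP: "(\<Sum>a\<in>UNIV. \<Sum>b\<in>UNIV. P p a b * P q a b) = x p q" for p q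
    unfolding P_def x_def inner_vec_def inner_real_def by (rule quad_swap)
  have Ptr: "(\<Sum>a\<in>UNIV. P p a a) = mm" if "p \<in> C" for p
  proof -
    have Bpp: "finite (B p)" "orthonormal (B p)" "card (B p) = m" using Bp[OF that] by auto
    have "(\<Sum>a\<in>UNIV. P p a a) = (\<Sum>w\<in>B p. w \<bullet> w)"
      unfolding P_def inner_vec_def inner_real_def by (subst sum.swap) simp
    also have "\<dots> = (\<Sum>w\<in>B p. 1)" using on_inner[OF Bpp(2)] by simp
    finally show ?thesis using Bpp unfolding mm_def by simp
  qed
  have Pid: "(\<Sum>c\<in>UNIV. P p a c * P p c b) = P p a b" if "p \<in> C" for p a b
  proof -
    have Bpp: "finite (B p)" "orthonormal (B p)" using Bp[OF that] by auto
    have "(\<Sum>c\<in>UNIV. P p a c * P p c b) = (\<Sum>w\<in>B p. \<Sum>z\<in>B p. w $ a * (w \<bullet> z) * z $ b)"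
      unfolding P_def inner_vec_def inner_real_def by (rule idem_swap)
    also have "\<dots> = (\<Sum>w\<in>B p. \<Sum>z\<in>B p. if w = z then w $ a * z $ b else 0)"
      using on_inner[OF Bpp(2)] by (intro sum.cong refl) auto
    also have "\<dots> = P p a b" unfolding P_def using Bpp(1) by simp
    finally show ?thesis .
  qed
  have Msym: "M p a b = M p b a" for p a b unfolding M_def P_def by (simp add: dl_sym mult.commute)
  have Mtr: "(\<Sum>a\<in>UNIV. M p a a) = 0" if "p \<in> C" for p
    unfolding M_def using Ptr[OF that] npos by (simp add: sum_subtractf k_def n_def)
  have Msq: "(\<Sum>c\<in>UNIV. M p a c * M p c b) = g * M p a b + (A / real CARD('n)) * dl a b" if "p \<in> C" for p a b
  proof -
    have "(\<Sum>c\<in>UNIV. M p a c * M p c b) = (\<Sum>c\<in>UNIV. P p a c * P p c b - k * (P p c b * dl a c) - k * (P p a c * dl c b) + k^2 * (dl a c * dl c b))"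
      unfolding M_def by (intro sum.cong refl) (simp add: algebra_simps power2_eq_square)
    also have "\<dots> = P p a b - k * P p a b - k * P p a b + k^2 * dl a b"
      by (simp add: sum.distrib sum_subtractf Pid[OF that] flip: sum_distrib_left)
    also have "\<dots> = g * M p a b + (A / real CARD('n)) * dl a b"
      unfolding M_def g_def A_def k_def n_def[symmetric] using npos by (simp add: field_simps power2_eq_square)
    finally show ?thesis .
  qed
  have yx: "(\<Sum>a\<in>UNIV. \<Sum>b\<in>UNIV. M p a b * M q a b) = x p q - bb" if "p \<in> C" "q \<in> C" for p q
  proof -
    have "(\<Sum>a\<in>UNIV. \<Sum>b\<in>UNIV. M p a b * M q a b) = (\<Sum>a\<in>UNIV. \<Sum>b\<in>UNIV. P p a b * P q a b - k * (P q a b * dl a b) - k * (P p a b * dl a b) + k^2 * dl a b)"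
      unfolding M_def by (intro sum.cong refl) (simp add: algebra_simps power2_eq_square dl_def)
    also have "\<dots> = x p q - k * mm - k * mm + k^2 * n"
      by (simp add: sum.distrib sum_subtractf PP Ptr[OF that(1)] Ptr[OF that(2)] n_def flip: sum_distrib_left)
    also have "\<dots> = x p q - bb" unfolding k_def bb_def using npos by (simp add: field_simps power2_eq_square)
    finally show ?thesis .
  qed
  define y where "y p q = x p q - bb" for p q
  have Msym': "\<And>p a b. p \<in> C \<Longrightarrow> M p a b = M p b a" using Msym by blast
  note K0 = key[where C=C and M=M and g=g and A=A, OF finC Msym' Mtr Msq n2']
  have yeq: "(\<Sum>a\<in>UNIV. \<Sum>b\<in>UNIV. M p a b * M q a b) = y p q" if "p \<in> C" "q \<in> C" for p q
    using yx[OF that] unfolding y_def .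
  have S1eq: "(\<Sum>p\<in>C. \<Sum>q\<in>C. (\<Sum>a\<in>UNIV. \<Sum>b\<in>UNIV. M p a b * M q a b)) = (\<Sum>p\<in>C. \<Sum>q\<in>C. y p q)"
    using yeq by (intro sum.cong refl) auto
  have S2eq: "(\<Sum>p\<in>C. \<Sum>q\<in>C. (\<Sum>a\<in>UNIV. \<Sum>b\<in>UNIV. M p a b * M q a b)^2) = (\<Sum>p\<in>C. \<Sum>q\<in>C. (y p q)^2)"
    using yeq by (intro sum.cong refl) auto
  define S where "S = (\<Sum>p\<in>C. \<Sum>q\<in>C. y p q)"
  define d where "d = (n - 1) * (n + 2) / 2"
  have K: "(\<Sum>p\<in>C. \<Sum>q\<in>C. (y p q)^2) \<ge> N^2 * A^2 / d + g^2 / n * S"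
    using K0 unfolding S1eq S2eq S_def N_def d_def n_def .
  have Snn: "S \<ge> 0" using ysum_nonneg[where C=C and A=UNIV and B=UNIV and M=M] unfolding S1eq S_def .
  have coef: "g^2 / n + bb - t \<ge> 0"
  proof -
    have "mm = 1 \<or> mm \<ge> 2" unfolding mm_def using assms(1) by (cases "m = 1") auto
    from ineq_aux[OF mm1 mmn this] have "g^2 / n + bb \<ge> e" unfolding g_def bb_def e_def by simp
    then show ?thesis using sE unfolding t_def by simp
  qed
  have fsum: "(\<Sum>p\<in>C. \<Sum>q\<in>C. (y p q - t) * (y p q + bb)) = (\<Sum>p\<in>C. \<Sum>q\<in>C. (y p q)^2) + (bb - t) * S - N^2 * (t * bb)"
  proof -
    have "(\<Sum>p\<in>C. \<Sum>q\<in>C. (y p q - t) * (y p q + bb)) = (\<Sum>p\<in>C. \<Sum>q\<in>C. (y p q)^2 + (bb - t) * y p q - t * bb)"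
      by (intro sum.cong refl) (simp add: algebra_simps power2_eq_square)
    also have "\<dots> = (\<Sum>p\<in>C. \<Sum>q\<in>C. (y p q)^2) + (bb - t) * S - N^2 * (t * bb)"
      unfolding S_def N_def by (simp add: sum.distrib sum_subtractf sum_distrib_left power2_eq_square)
    finally show ?thesis .
  qed
  have Ay: "y p p = A" if "p \<in> C" for p unfolding y_def A_def bb_def using xdiag[OF that] by simp
  have fup: "(\<Sum>p\<in>C. \<Sum>q\<in>C. (y p q - t) * (y p q + bb)) \<le> N * ((A - t) * (A + bb))"
  proof -
    have "(\<Sum>q\<in>C. (y p q - t) * (y p q + bb)) \<le> (A - t) * (A + bb)" if "p \<in> C" for p
    proof -
      have "(\<Sum>q\<in>C. (y p q - t) * (y p q + bb)) = (y p p - t) * (y p p + bb) + (\<Sum>q\<in>C - {p}. (y p q - t) * (y p q + bb))"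
        using finC that by (rule sum.remove)
      also have "(\<Sum>q\<in>C - {p}. (y p q - t) * (y p q + bb)) \<le> 0"
      proof (rule sum_nonpos)
        fix q assume "q \<in> C - {p}"
        then have "x p q \<le> s" using xoff[OF that] by auto
        then have "y p q - t \<le> 0" "y p q + bb \<ge> 0" using xnn[of p q] unfolding y_def t_def by auto
        then show "(y p q - t) * (y p q + bb) \<le> 0" by (rule mult_nonpos_nonneg)
      qed
      finally show ?thesis using Ay[OF that] by simp
    qed
    then have "(\<Sum>p\<in>C. \<Sum>q\<in>C. (y p q - t) * (y p q + bb)) \<le> (\<Sum>p\<in>C. (A - t) * (A + bb))"
      by (rule sum_mono)
    then show ?thesis unfolding N_def by simp
  qed
  have Ad: "A^2 / d = bb * e"
    unfolding A_def d_def bb_def e_def using n2 by (simp add: field_simps power2_eq_square)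
  have low: "(\<Sum>p\<in>C. \<Sum>q\<in>C. (y p q - t) * (y p q + bb)) \<ge> N^2 * (bb * (bb + e - s))"
  proof -
    have "(g^2 / n + bb - t) * S \<ge> 0" using coef Snn by simp
    have E1: "N^2 * A^2 / d = N^2 * (bb * e)" using Ad by (metis times_divide_eq_right)
    have "N^2 * A^2 / d + g^2 / n * S + (bb - t) * S - N^2 * (t * bb) - N^2 * (bb * (bb + e - s))
       = (g^2 / n + bb - t) * S" unfolding E1 t_def by (simp add: algebra_simps)
    then have "N^2 * (bb * (bb + e - s)) \<le> N^2 * A^2 / d + g^2 / n * S + (bb - t) * S - N^2 * (t * bb)"
      using \<open>(g^2 / n + bb - t) * S \<ge> 0\<close> by linarith
    also have "\<dots> \<le> (\<Sum>p\<in>C. \<Sum>q\<in>C. (y p q)^2) + (bb - t) * S - N^2 * (t * bb)" using K by simp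
    finally show ?thesis unfolding fsum .
  qed
  have AA: "(A - t) * (A + bb) = mm * (mm - s)" unfolding A_def t_def bb_def by (simp add: algebra_simps)
  have main: "N^2 * (bb * (bb + e - s)) \<le> N * (mm * (mm - s))" using low fup AA by simp
  have Q: "bb + e - s > 0" using sE by simp
  have bbpos: "bb > 0" unfolding bb_def using mm1 npos by simp
  have ms: "mm - s > 0" unfolding sdef using assms(3) by simp
  have mmpos: "mm > 0" using mm1 by simp
  have "N \<le> n / mm * ((mm - s) / (- s + bb + e))"
  proof (cases "N = 0")
    case True
    then show ?thesis using Q ms mmpos npos by (simp add: add.commute)
  next
    case False
    then have Np: "N > 0" unfolding N_def by simp
    have "N * (bb * (bb + e - s)) \<le> mm * (mm - s)"
      using main Np by (simp add: power2_eq_square mult.assoc)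
    moreover have "bb * (bb + e - s) > 0" using bbpos Q by simp
    ultimately have "N \<le> mm * (mm - s) / (bb * (bb + e - s))" by (simp add: pos_le_divide_eq)
    also have "\<dots> = (mm / bb) * ((mm - s) / (- s + bb + e))"
      by (simp add: algebra_simps)
    also have "mm / bb = n / mm"
      unfolding bb_def using npos mmpos by (simp add: field_simps power2_eq_square)
    finally show ?thesis .
  qed
  then show ?thesis unfolding N_def n_def mm_def bb_def e_def by simp
qed

end
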